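(* Let $\Omega\in\mathcal{M}_{n,1}$ with encoded table $(k;a_1,\dots,a_n;b,\beta)$. There is a unique $\overline{\Omega}\in\mathcal{M}_{n,1}$ such that, with $\rho(x,y)=(y-1-x,y)$: the set of junctions of $\overline{\Omega}$ is the image under $\rho$ of the set of junctions of $\Omega$, the start vertex of the $S$-step of $\overline{\Omega}$ is the image under $\rho$ of the start vertex of the $S$-step of $\Omega$, and the end vertex of the $N$-step of $\overline{\Omega}$ is the image under $\rho$ of the end vertex of the $N$-step of $\Omega$. The table $(k;\overline{a}_1,\dots,\overline{a}_n;\overline{b},\overline{\beta})$ encoded by $\overline{\Omega}$ (with the same $k$) is given by $\overline{a}_i=i-1-a_i$ for $i\ne k-1$, $\overline{a}_{k-1}=k-2-a_k-b$, $\overline{b}=a_k-1-a_{k-1}$, $\overline{\beta}=a_k+b-a_{k-1}-\beta-1$.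
   Context: Mixed configurations: let $\mathcal{G}_n=\{(x,y)\in\mathbb{Z}^2: 0\le x<y\le n\}$. Steps are $E=(1,0)$, $F=(1,0)$ (a distinct letter from $E$ with the same displacement), $S=(0,-1)$, $N=(1,1)$. A mixed path is a lattice path all of whose vertices lie in $\mathcal{G}_n$, given as a word $LR$ where the Left part $L$ is a word in $\{S,E\}$ and the Right part $R$ is a word in $\{F,N\}$; the vertex where $L$ ends and $R$ begins is the junction. An order-$n$ mixed configuration is a sequence $(\omega_1,\dots,\omega_n)$ of mixed paths such that for some permutation $\sigma$ of $\{1,\dots,n\}$, $\omega_i$ starts at $(0,i)$ and ends at $(\sigma(i)-1,\sigma(i))$, the Left parts are pairwise vertex-disjoint, and the Right parts are pairwise vertex-disjoint. $\mathcal{M}_{n,s}$ is the set of order-$n$ mixed configurations containing exactly $s$ $N$-steps in total (an element of $\mathcal{M}_{n,1}$ then has exactly one $S$-step as well). Every $\Omega=(\omega_1,\dots,\omega_n)\in\mathcal{M}_{n,1}$ can be written uniquely in the form $\omega_i=E^{a_i}F^{i-1-a_i}$ for $i\notin\{k-1,k\}$, $\omega_{k-1}=E^{a_{k-1}}F^{\beta}NF^{k-2-a_{k-1}-\beta}$, $\omega_k=E^{a_k}SE^{b}F^{k-2-a_k-b}$, for non-negative integers $k,a_1,\dots,a_n,b,\beta$ (exponents denote repetition of steps); the sequence $(k;a_1,\dots,a_n;b,\beta)$ is called the table encoded by $\Omega$. *)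

theory Defs
  imports Main
begin

datatype step = E | F | S | N

type_synonym point = "int \<times> int"

fun disp :: "step \<Rightarrow> point" where
  "disp E = (1, 0)"
| "disp F = (1, 0)"
| "disp S = (0, -1)"
| "disp N = (1, 1)"

fun verts :: "point \<Rightarrow> step list \<Rightarrow> point list" where
  "verts p [] = [p]"
| "verts p (s # w) = p # verts (fst p + fst (disp s), snd p + snd (disp s)) w"

definition endpt :: "point \<Rightarrow> step list \<Rightarrow> point" where
  "endpt p w = last (verts p w)"

definition in_G :: "nat \<Rightarrow> point \<Rightarrow> bool" where
  "in_G n v \<longleftrightarrow> 0 \<le> fst v \<and> fst v < snd v \<and> snd v \<le> int n"

definition mixed_word :: "step list \<Rightarrow> bool" where
  "mixed_word w \<longleftrightarrow> (\<exists>L R. w = L @ R \<and> set L \<subseteq> {S, E} \<and> set R \<subseteq> {F, N})"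

definition leftpart :: "step list \<Rightarrow> step list" where
  "leftpart w = takeWhile (\<lambda>s. s = S \<or> s = E) w"

definition rightpart :: "step list \<Rightarrow> step list" where
  "rightpart w = dropWhile (\<lambda>s. s = S \<or> s = E) w"

(* the i-th path (1-based) of a configuration given as list of words; it starts at (0,i) *)
definition path :: "step list list \<Rightarrow> nat \<Rightarrow> step list" where
  "path \<Omega> i = \<Omega> ! (i - 1)"

definition start :: "nat \<Rightarrow> point" where
  "start i = (0, int i)"

definition junction :: "nat \<Rightarrow> step list \<Rightarrow> point" where
  "junction i w = endpt (start i) (leftpart w)"

definition left_verts :: "nat \<Rightarrow> step list \<Rightarrow> point set" where
  "left_verts i w = set (verts (start i) (leftpart w))"

definition right_verts :: "nat \<Rightarrow> step list \<Rightarrow> point set" where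
  "right_verts i w = set (verts (junction i w) (rightpart w))"

definition count_step :: "step \<Rightarrow> step list \<Rightarrow> nat" where
  "count_step s w = length (filter (\<lambda>x. x = s) w)"

definition mixed_config :: "nat \<Rightarrow> step list list \<Rightarrow> bool" where
  "mixed_config n \<Omega> \<longleftrightarrow>
     length \<Omega> = n \<and>
     (\<forall>i\<in>{1..n}. mixed_word (path \<Omega> i) \<and>
                  (\<forall>v\<in>set (verts (start i) (path \<Omega> i)). in_G n v)) \<and>
     (\<exists>\<sigma>. bij_betw \<sigma> {1..n} {1..n} \<and>
          (\<forall>i\<in>{1..n}. endpt (start i) (path \<Omega> i) = (int (\<sigma> i) - 1, int (\<sigma> i)))) \<and>
     (\<forall>i\<in>{1..n}. \<forall>j\<in>{1..n}. i \<noteq> j \<longrightarrow>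
        left_verts i (path \<Omega> i) \<inter> left_verts j (path \<Omega> j) = {} \<and>
        right_verts i (path \<Omega> i) \<inter> right_verts j (path \<Omega> j) = {})"

definition M :: "nat \<Rightarrow> nat \<Rightarrow> step list list set" where
  "M n s = {\<Omega>. mixed_config n \<Omega> \<and> (\<Sum>i=1..n. count_step N (path \<Omega> i)) = s}"

definition junctions :: "nat \<Rightarrow> step list list \<Rightarrow> point set" where
  "junctions n \<Omega> = {junction i (path \<Omega> i) | i. i \<in> {1..n}}"

(* start vertices of S-steps (a singleton for elements of M n 1) *)
definition S_starts :: "nat \<Rightarrow> step list list \<Rightarrow> point set" where
  "S_starts n \<Omega> = {verts (start i) (path \<Omega> i) ! p | i p.
       i \<in> {1..n} \<and> p < length (path \<Omega> i) \<and> path \<Omega> i ! p = S}"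

(* end vertices of N-steps (a singleton for elements of M n 1) *)
definition N_ends :: "nat \<Rightarrow> step list list \<Rightarrow> point set" where
  "N_ends n \<Omega> = {verts (start i) (path \<Omega> i) ! (p + 1) | i p.
       i \<in> {1..n} \<and> p < length (path \<Omega> i) \<and> path \<Omega> i ! p = N}"

definition rho :: "point \<Rightarrow> point" where
  "rho v = (snd v - 1 - fst v, snd v)"

definition rep :: "int \<Rightarrow> step \<Rightarrow> step list" where
  "rep m s = replicate (nat m) s"

definition encodes :: "nat \<Rightarrow> step list list \<Rightarrow> nat \<Rightarrow> (nat \<Rightarrow> int) \<Rightarrow> int \<Rightarrow> int \<Rightarrow> bool" where
  "encodes n \<Omega> k a b \<beta> \<longleftrightarrow>
     length \<Omega> = n \<and> 2 \<le> k \<and> k \<le> n \<and> 0 \<le> b \<and> 0 \<le> \<beta> \<and>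
     (\<forall>i\<in>{1..n}. 0 \<le> a i) \<and>
     (\<forall>i\<in>{1..n}. i \<noteq> k - 1 \<and> i \<noteq> k \<longrightarrow>
        int i - 1 - a i \<ge> 0 \<and> path \<Omega> i = rep (a i) E @ rep (int i - 1 - a i) F) \<and>
     int k - 2 - a (k - 1) - \<beta> \<ge> 0 \<and>
     path \<Omega> (k - 1) = rep (a (k - 1)) E @ rep \<beta> F @ [N] @ rep (int k - 2 - a (k - 1) - \<beta>) F \<and>
     int k - 2 - a k - b \<ge> 0 \<and>
     path \<Omega> k = rep (a k) E @ [S] @ rep b E @ rep (int k - 2 - a k - b) F"

end

theory Submission
  imports Defs
begin


lemma verts_ne: "verts p w \<noteq> []" by (cases w) auto

lemma endpt_Nil[simp]: "endpt p [] = p" by (simp add: endpt_def)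
lemma endpt_Cons[simp]: "endpt p (s # w) = endpt (fst p + fst (disp s), snd p + snd (disp s)) w"
  by (simp add: endpt_def verts_ne)

lemma endpt_append: "endpt p (u @ v) = endpt (endpt p u) v"
  by (induction u arbitrary: p) auto

lemma hd_verts_mem: "p \<in> set (verts p w)" by (cases w) auto

lemma set_verts_append: "set (verts p (u @ v)) = set (verts p u) \<union> set (verts (endpt p u) v)"
proof (induction u arbitrary: p)
  case Nil then show ?case using hd_verts_mem[of p v] by auto
next
  case (Cons s u) then show ?case by auto
qed

lemma verts_append_nth: "verts p (u @ v) ! length u = endpt p u"
proof (induction u arbitrary: p)
  case Nil then show ?case by (cases v) auto
next
  case (Cons s u) then show ?case by auto
qed

lemma endpt_mem: "endpt p w \<in> set (verts p w)"
  by (simp add: endpt_def verts_ne)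

lemma count_step_Nil[simp]: "count_step s [] = 0" by (simp add: count_step_def)
lemma count_step_Cons[simp]: "count_step s (x # w) = (if x = s then 1 else 0) + count_step s w"
  by (simp add: count_step_def)
lemma count_step_append[simp]: "count_step s (u @ w) = count_step s u + count_step s w"
  by (simp add: count_step_def)
lemma count_step_replicate[simp]: "count_step s (replicate m x) = (if x = s then m else 0)"
  by (induction m) auto

lemma count_step_le: "count_step S w \<le> length w" by (simp add: count_step_def)

lemma endpt_formula:
  "endpt p w = (fst p + int (length w) - int (count_step S w),
                snd p + int (count_step N w) - int (count_step S w))"
proof (induction w arbitrary: p)
  case Nil then show ?case by simp
next
  case (Cons s w) then show ?case by (cases s) auto
qed

definition hseg :: "int \<Rightarrow> int \<Rightarrow> int \<Rightarrow> point set" where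
  "hseg x0 x1 y = {(x, y') | x y'. y' = y \<and> x0 \<le> x \<and> x \<le> x1}"

lemma mem_hseg[simp]: "(p \<in> hseg x0 x1 y) \<longleftrightarrow> snd p = y \<and> x0 \<le> fst p \<and> fst p \<le> x1"
  by (cases p) (auto simp: hseg_def)

lemma verts_rep_h:
  assumes "s = E \<or> s = F"
  shows "set (verts (x, y) (replicate m s)) = hseg x (x + int m) y \<and>
         endpt (x, y) (replicate m s) = (x + int m, y)"
proof (induction m arbitrary: x)
  case 0 then show ?case by (auto simp: hseg_def)
next
  case (Suc m)
  have d: "disp s = (1, 0)" using assms by auto
  have "set (verts (x, y) (replicate (Suc m) s)) = insert (x, y) (set (verts (x + 1, y) (replicate m s)))"
    using d by simp
  also have "\<dots> = hseg x (x + int (Suc m)) y" using Suc[of "x+1"] by auto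
  finally show ?case using Suc[of "x+1"] d by simp
qed

lemma rep_nat: "rep m s = replicate (nat m) s" by (simp add: rep_def)

lemma count_zero_iff: "count_step x L = 0 \<longleftrightarrow> x \<notin> set L"
  by (auto simp: count_step_def filter_empty_conv)

lemma shape0: "set L \<subseteq> {x, y} \<Longrightarrow> count_step x L = 0 \<Longrightarrow> L = replicate (length L) y"
  by (metis count_zero_iff insertE replicate_length_same singletonD subsetD)

lemma shape1:
  assumes "set L \<subseteq> {x, y}" "count_step x L = 1"
  shows "\<exists>a b. L = replicate a y @ x # replicate b y"
proof -
  have "x \<in> set L" using assms(2) count_zero_iff[of x L] by auto
  then obtain u v where L: "L = u @ x # v" and xu: "x \<notin> set u" by (meson split_list_first)
  have cu: "count_step x u = 0" using xu count_zero_iff by blast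
  have cv: "count_step x v = 0" using assms(2) L cu by simp
  have "u = replicate (length u) y" using shape0[of u x y] cu assms(1) L by auto
  moreover have "v = replicate (length v) y" using shape0[of v x y] cv assms(1) L by auto
  ultimately show ?thesis using L by metis
qed

lemma nth_unique:
  assumes "xs = u @ x # v" "x \<notin> set u" "x \<notin> set v" "p < length xs" "xs ! p = x"
  shows "p = length u"
proof (rule ccontr)
  assume ne: "p \<noteq> length u"
  show False
  proof (cases "p < length u")
    case True
    then have "xs ! p = u ! p" using assms(1) by (simp add: nth_append)
    then show False using True assms(2,5) nth_mem by metis
  next
    case False
    then have gt: "p > length u" using ne by simp
    then have "xs ! p = v ! (p - length u - 1)" using assms(1)
      by (simp add: nth_append)
    moreover have "p - length u - 1 < length v" using gt assms(1,4) by simp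
    ultimately show False using assms(3,5) nth_mem by metis
  qed
qed



lemma tw_rep[simp]: "P x \<Longrightarrow> takeWhile P (replicate m x @ w) = replicate m x @ takeWhile P w"
  by (induction m) auto
lemma dw_rep[simp]: "P x \<Longrightarrow> dropWhile P (replicate m x @ w) = dropWhile P w"
  by (induction m) auto
lemma tw_rep2[simp]: "\<not> P x \<Longrightarrow> takeWhile P (replicate m x @ w) = (if m = 0 then takeWhile P w else [])"
  by (cases m) auto
lemma dw_rep2[simp]: "\<not> P x \<Longrightarrow> dropWhile P (replicate m x @ w) = (if m = 0 then dropWhile P w else replicate m x @ w)"
  by (cases m) auto
lemma tw_rep3[simp]: "takeWhile P (replicate m x) = (if P x \<or> m = 0 then replicate m x else [])"
  by (induction m) auto
lemma dw_rep3[simp]: "dropWhile P (replicate m x) = (if P x then [] else replicate m x)"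
  by (induction m) auto

lemma vE: "set (verts (x, y) (replicate m E)) = hseg x (x + int m) y"
          "endpt (x, y) (replicate m E) = (x + int m, y)"
  using verts_rep_h[of E x y m] by auto
lemma vF: "set (verts (x, y) (replicate m F)) = hseg x (x + int m) y"
          "endpt (x, y) (replicate m F) = (x + int m, y)"
  using verts_rep_h[of F x y m] by auto

lemma tf_E:
  assumes "0 \<le> a" "0 \<le> c" "w = rep a E @ rep c F"
  shows "leftpart w = rep a E" "rightpart w = rep c F"
    "left_verts i w = hseg 0 a (int i)" "junction i w = (a, int i)"
    "right_verts i w = hseg a (a + c) (int i)" "endpt (start i) w = (a + c, int i)"
    "count_step N w = 0" "count_step S w = 0" "mixed_word w"
    "set (verts (start i) w) = hseg 0 a (int i) \<union> hseg a (a + c) (int i)"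
proof -
  show l: "leftpart w = rep a E" using assms
    by (simp add: leftpart_def rep_nat)
  show r: "rightpart w = rep c F" using assms
    by (simp add: rightpart_def rep_nat)
  show "left_verts i w = hseg 0 a (int i)" using l assms
    by (simp add: left_verts_def start_def rep_nat vE)
  show j: "junction i w = (a, int i)" using l assms
    by (simp add: junction_def start_def rep_nat vE)
  show "right_verts i w = hseg a (a + c) (int i)" using r j assms
    by (simp add: right_verts_def rep_nat vF)
  show "endpt (start i) w = (a + c, int i)" using assms
    by (simp add: endpt_append start_def rep_nat vE vF)
  show "count_step N w = 0" "count_step S w = 0" using assms by (simp_all add: rep_nat)
  show "mixed_word w" unfolding mixed_word_def using assms
    by (intro exI[of _ "rep a E"] exI[of _ "rep c F"]) (auto simp: rep_nat)
  show "set (verts (start i) w) = hseg 0 a (int i) \<union> hseg a (a + c) (int i)" using assms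
    by (simp add: set_verts_append start_def rep_nat vE vF)
qed

lemma tf_N:
  assumes "0 \<le> a" "0 \<le> \<beta>" "0 \<le> d" "w = rep a E @ rep \<beta> F @ [N] @ rep d F"
  shows "leftpart w = rep a E" "rightpart w = rep \<beta> F @ [N] @ rep d F"
    "left_verts i w = hseg 0 a (int i)" "junction i w = (a, int i)"
    "right_verts i w = hseg a (a + \<beta>) (int i) \<union> hseg (a + \<beta> + 1) (a + \<beta> + 1 + d) (int i + 1)"
    "endpt (start i) w = (a + \<beta> + 1 + d, int i + 1)"
    "count_step N w = 1" "count_step S w = 0" "mixed_word w"
    "set (verts (start i) w) = hseg 0 a (int i) \<union>
        (hseg a (a + \<beta>) (int i) \<union> hseg (a + \<beta> + 1) (a + \<beta> + 1 + d) (int i + 1))"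
    "\<And>p. p < length w \<and> w ! p = N \<longleftrightarrow> p = nat a + nat \<beta>"
    "verts (start i) w ! (nat a + nat \<beta> + 1) = (a + \<beta> + 1, int i + 1)"
proof -
  show l: "leftpart w = rep a E" using assms
    by (simp add: leftpart_def rep_nat)
  show r: "rightpart w = rep \<beta> F @ [N] @ rep d F" using assms
    by (simp add: rightpart_def rep_nat)
  show "left_verts i w = hseg 0 a (int i)" using l assms
    by (simp add: left_verts_def start_def rep_nat vE)
  show j: "junction i w = (a, int i)" using l assms
    by (simp add: junction_def start_def rep_nat vE)
  show "right_verts i w = hseg a (a + \<beta>) (int i) \<union> hseg (a + \<beta> + 1) (a + \<beta> + 1 + d) (int i + 1)"
    using r j assms
    by (simp add: right_verts_def rep_nat vF set_verts_append endpt_append) (auto simp: add.commute add.left_commute)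
  show "endpt (start i) w = (a + \<beta> + 1 + d, int i + 1)" using assms
    by (simp add: endpt_append start_def rep_nat vE vF)
  show "count_step N w = 1" "count_step S w = 0" using assms by (simp_all add: rep_nat)
  show "mixed_word w" unfolding mixed_word_def using assms
    by (intro exI[of _ "rep a E"] exI[of _ "rep \<beta> F @ [N] @ rep d F"]) (auto simp: rep_nat)
  show "set (verts (start i) w) = hseg 0 a (int i) \<union>
        (hseg a (a + \<beta>) (int i) \<union> hseg (a + \<beta> + 1) (a + \<beta> + 1 + d) (int i + 1))" using assms
    by (simp add: set_verts_append endpt_append start_def rep_nat vE vF) (auto simp: add.commute add.left_commute)
  show "\<And>p. p < length w \<and> w ! p = N \<longleftrightarrow> p = nat a + nat \<beta>"
  proof
    fix p assume "p < length w \<and> w ! p = N"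
    then show "p = nat a + nat \<beta>"
      using nth_unique[of w "rep a E @ rep \<beta> F" N "rep d F" p] assms by (auto simp: rep_nat)
  next
    fix p assume "p = nat a + nat \<beta>"
    then show "p < length w \<and> w ! p = N" using assms
      by (simp add: rep_nat nth_append)
  qed
  have "verts (start i) w ! (nat a + nat \<beta> + 1) = verts (start i) ((rep a E @ rep \<beta> F @ [N]) @ rep d F) ! length (rep a E @ rep \<beta> F @ [N])"
    using assms by (simp add: rep_nat)
  also have "\<dots> = endpt (start i) (rep a E @ rep \<beta> F @ [N])" by (rule verts_append_nth)
  also have "\<dots> = (a + \<beta> + 1, int i + 1)" using assms by (simp add: endpt_append start_def rep_nat vE vF)
  finally show "verts (start i) w ! (nat a + nat \<beta> + 1) = (a + \<beta> + 1, int i + 1)" .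
qed

lemma tf_S:
  assumes "0 \<le> a" "0 \<le> b" "0 \<le> c" "w = rep a E @ [S] @ rep b E @ rep c F"
  shows "leftpart w = rep a E @ [S] @ rep b E" "rightpart w = rep c F"
    "left_verts i w = hseg 0 a (int i) \<union> hseg a (a + b) (int i - 1)"
    "junction i w = (a + b, int i - 1)"
    "right_verts i w = hseg (a + b) (a + b + c) (int i - 1)"
    "endpt (start i) w = (a + b + c, int i - 1)"
    "count_step N w = 0" "count_step S w = 1" "mixed_word w"
    "set (verts (start i) w) = (hseg 0 a (int i) \<union> hseg a (a + b) (int i - 1)) \<union>
        hseg (a + b) (a + b + c) (int i - 1)"
    "\<And>p. p < length w \<and> w ! p = S \<longleftrightarrow> p = nat a"
    "verts (start i) w ! nat a = (a, int i)"
proof -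
  show l: "leftpart w = rep a E @ [S] @ rep b E" using assms
    by (simp add: leftpart_def rep_nat)
  show r: "rightpart w = rep c F" using assms
    by (simp add: rightpart_def rep_nat)
  show "left_verts i w = hseg 0 a (int i) \<union> hseg a (a + b) (int i - 1)" using l assms
    by (simp add: left_verts_def start_def rep_nat vE set_verts_append endpt_append)
      (auto simp: add.commute add.left_commute)
  show j: "junction i w = (a + b, int i - 1)" using l assms
    by (simp add: junction_def start_def rep_nat vE endpt_append)
  show "right_verts i w = hseg (a + b) (a + b + c) (int i - 1)" using r j assms
    by (simp add: right_verts_def rep_nat vF)
  show "endpt (start i) w = (a + b + c, int i - 1)" using assms
    by (simp add: endpt_append start_def rep_nat vE vF)
  show "count_step N w = 0" "count_step S w = 1" using assms by (simp_all add: rep_nat)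
  show "mixed_word w" unfolding mixed_word_def using assms
    by (intro exI[of _ "rep a E @ [S] @ rep b E"] exI[of _ "rep c F"]) (auto simp: rep_nat)
  show "set (verts (start i) w) = (hseg 0 a (int i) \<union> hseg a (a + b) (int i - 1)) \<union>
        hseg (a + b) (a + b + c) (int i - 1)" using assms
    by (simp add: set_verts_append endpt_append start_def rep_nat vE vF) (auto simp: add.commute add.left_commute)
  show "\<And>p. p < length w \<and> w ! p = S \<longleftrightarrow> p = nat a"
  proof
    fix p assume "p < length w \<and> w ! p = S"
    then show "p = nat a"
      using nth_unique[of w "rep a E" S "rep b E @ rep c F" p] assms by (auto simp: rep_nat)
  next
    fix p assume "p = nat a"
    then show "p < length w \<and> w ! p = S" using assms
      by (simp add: rep_nat nth_append)
  qed
  have "verts (start i) w ! nat a = verts (start i) (rep a E @ ([S] @ rep b E @ rep c F)) ! length (rep a E)"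
    using assms by (simp add: rep_nat)
  also have "\<dots> = endpt (start i) (rep a E)" by (rule verts_append_nth)
  also have "\<dots> = (a, int i)" using assms by (simp add: start_def rep_nat vE)
  finally show "verts (start i) w ! nat a = (a, int i)" .
qed



definition LV :: "nat \<Rightarrow> (nat \<Rightarrow> int) \<Rightarrow> int \<Rightarrow> nat \<Rightarrow> point set" where
  "LV k a b i = (if i = k then hseg 0 (a k) (int k) \<union> hseg (a k) (a k + b) (int k - 1)
                 else hseg 0 (a i) (int i))"
definition RV :: "nat \<Rightarrow> (nat \<Rightarrow> int) \<Rightarrow> int \<Rightarrow> int \<Rightarrow> nat \<Rightarrow> point set" where
  "RV k a b \<beta> i = (if i = k then hseg (a k + b) (int k - 2) (int k - 1)
                 else if i = k - 1 then hseg (a (k-1)) (a (k-1) + \<beta>) (int k - 1) \<union>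
                                        hseg (a (k-1) + \<beta> + 1) (int k - 1) (int k)
                 else hseg (a i) (int i - 1) (int i))"
definition JN :: "nat \<Rightarrow> (nat \<Rightarrow> int) \<Rightarrow> int \<Rightarrow> nat \<Rightarrow> point" where
  "JN k a b i = (if i = k then (a k + b, int k - 1) else (a i, int i))"
definition sig :: "nat \<Rightarrow> nat \<Rightarrow> nat" where
  "sig k i = (if i = k then k - 1 else if i = k - 1 then k else i)"

lemma enc_path:
  assumes enc: "encodes n \<Omega> k a b \<beta>" and i: "i \<in> {1..n}"
  shows "left_verts i (path \<Omega> i) = LV k a b i \<and> right_verts i (path \<Omega> i) = RV k a b \<beta> i \<and>
         junction i (path \<Omega> i) = JN k a b i \<and>
         set (verts (start i) (path \<Omega> i)) = LV k a b i \<union> RV k a b \<beta> i \<and>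
         endpt (start i) (path \<Omega> i) = (int (sig k i) - 1, int (sig k i)) \<and>
         count_step N (path \<Omega> i) = (if i = k - 1 then 1 else 0) \<and>
         count_step S (path \<Omega> i) = (if i = k then 1 else 0) \<and>
         mixed_word (path \<Omega> i)"
proof -
  from enc have k2: "2 \<le> k" "k \<le> n" and b0: "0 \<le> b" and be0: "0 \<le> \<beta>"
    and a0: "\<forall>i\<in>{1..n}. 0 \<le> a i" by (auto simp: encodes_def)
  have k1: "k - 1 \<in> {1..n}" "k \<in> {1..n}" using k2 by auto
  show ?thesis
  proof (cases "i = k")
    case True
    have w: "path \<Omega> k = rep (a k) E @ [S] @ rep b E @ rep (int k - 2 - a k - b) F"
      and c0: "int k - 2 - a k - b \<ge> 0" using enc by (auto simp: encodes_def)
    have ak: "0 \<le> a k" using a0 k1 by auto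
    note t = tf_S[OF ak b0 c0 w]
    show ?thesis using True t a0 k1 k2
      by (simp add: LV_def RV_def JN_def sig_def of_nat_diff)
  next
    case nk: False
    show ?thesis
    proof (cases "i = k - 1")
      case True
      have w: "path \<Omega> (k-1) = rep (a (k-1)) E @ rep \<beta> F @ [N] @ rep (int k - 2 - a (k-1) - \<beta>) F"
        and c0: "int k - 2 - a (k-1) - \<beta> \<ge> 0" using enc by (auto simp: encodes_def)
      have ak: "0 \<le> a (k-1)" using a0 k1 by auto
      note t = tf_N[OF ak be0 c0 w]
      have ik: "int (k - 1) = int k - 1" using k2 by simp
      show ?thesis using True nk t a0 k1 k2 ik
        by (simp add: LV_def RV_def JN_def sig_def)
    next
      case False
      have w: "path \<Omega> i = rep (a i) E @ rep (int i - 1 - a i) F"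
        and c0: "int i - 1 - a i \<ge> 0" using enc i nk False by (auto simp: encodes_def)
      have ak: "0 \<le> a i" using a0 i by auto
      note t = tf_E[OF ak c0 w]
      show ?thesis using False nk t a0 i
        by (simp add: LV_def RV_def JN_def sig_def)
    qed
  qed
qed

lemma enc_junctions:
  assumes enc: "encodes n \<Omega> k a b \<beta>"
  shows "junctions n \<Omega> = {(a i, int i) | i. i \<in> {1..n} \<and> i \<noteq> k - 1 \<and> i \<noteq> k} \<union>
                          {(a (k-1), int k - 1), (a k + b, int k - 1)}"
proof -
  from enc have k2: "2 \<le> k" "k \<le> n" by (auto simp: encodes_def)
  have k1: "k - 1 \<in> {1..n}" "k \<in> {1..n}" using k2 by auto
  have ik: "int (k - 1) = int k - 1" using k2 by simp
  have J: "\<And>i. i \<in> {1..n} \<Longrightarrow> junction i (path \<Omega> i) = JN k a b i" using enc_path[OF enc] by blast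
  show ?thesis
  proof (intro equalityI subsetI)
    fix p assume "p \<in> junctions n \<Omega>"
    then obtain i where i: "i \<in> {1..n}" and p: "p = junction i (path \<Omega> i)" by (auto simp: junctions_def)
    then show "p \<in> {(a i, int i) | i. i \<in> {1..n} \<and> i \<noteq> k - 1 \<and> i \<noteq> k} \<union>
                          {(a (k-1), int k - 1), (a k + b, int k - 1)}"
      using J[OF i] ik by (auto simp: JN_def)
  next
    fix p assume p: "p \<in> {(a i, int i) | i. i \<in> {1..n} \<and> i \<noteq> k - 1 \<and> i \<noteq> k} \<union>
                          {(a (k-1), int k - 1), (a k + b, int k - 1)}"
    have "JN k a b i \<in> junctions n \<Omega>" if "i \<in> {1..n}" for i
      using J[OF that] that unfolding junctions_def by force
    note JJ = this
    have "k - 1 \<noteq> k" using k2 by simp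
    then have "JN k a b (k-1) = (a (k-1), int k - 1)" using ik by (simp add: JN_def)
    then have 1: "(a (k-1), int k - 1) \<in> junctions n \<Omega>" using JJ[OF k1(1)] by simp
    have "JN k a b k = (a k + b, int k - 1)" by (simp add: JN_def)
    then have 3: "(a k + b, int k - 1) \<in> junctions n \<Omega>" using JJ[OF k1(2)] by simp
    have 2: "(a i, int i) \<in> junctions n \<Omega>" if "i \<in> {1..n}" "i \<noteq> k" for i
      using JJ[OF that(1)] that(2) by (simp add: JN_def)
    show "p \<in> junctions n \<Omega>" using p 1 2 3 by auto
  qed
qed

lemma enc_S:
  assumes enc: "encodes n \<Omega> k a b \<beta>"
  shows "S_starts n \<Omega> = {(a k, int k)}"
proof -
  from enc have k2: "2 \<le> k" "k \<le> n" and b0: "0 \<le> b" and a0: "0 \<le> a k" by (auto simp: encodes_def)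
  have w: "path \<Omega> k = rep (a k) E @ [S] @ rep b E @ rep (int k - 2 - a k - b) F"
    and c0: "int k - 2 - a k - b \<ge> 0" using enc by (auto simp: encodes_def)
  note t = tf_S[OF a0 b0 c0 w]
  have noS: "\<And>i p. i \<in> {1..n} \<Longrightarrow> i \<noteq> k \<Longrightarrow> p < length (path \<Omega> i) \<Longrightarrow> path \<Omega> i ! p \<noteq> S"
  proof
    fix i p assume i: "i \<in> {1..n}" "i \<noteq> k" "p < length (path \<Omega> i)" "path \<Omega> i ! p = S"
    have "count_step S (path \<Omega> i) = 0" using enc_path[OF enc i(1)] i(2) by simp
    then show False using i(3,4) count_zero_iff nth_mem by metis
  qed
  show ?thesis
  proof (intro equalityI subsetI)
    fix q assume "q \<in> S_starts n \<Omega>"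
    then obtain i p where ip: "i \<in> {1..n}" "p < length (path \<Omega> i)" "path \<Omega> i ! p = S"
      "q = verts (start i) (path \<Omega> i) ! p" unfolding S_starts_def by blast
    have ik: "i = k" using noS ip by blast
    then have "p = nat (a k)" using t(11) ip by blast
    then show "q \<in> {(a k, int k)}" using t(12) ip ik by simp
  next
    fix q assume "q \<in> {(a k, int k)}"
    have "k \<in> {1..n}" using k2 by simp
    then have "verts (start k) (path \<Omega> k) ! nat (a k) \<in> S_starts n \<Omega>"
      unfolding S_starts_def using t(11)[of "nat (a k)"] by blast
    then show "q \<in> S_starts n \<Omega>" using t(12) \<open>q \<in> {(a k, int k)}\<close> by simp
  qed
qed

lemma enc_N:
  assumes enc: "encodes n \<Omega> k a b \<beta>"
  shows "N_ends n \<Omega> = {(a (k-1) + \<beta> + 1, int k)}"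
proof -
  from enc have k2: "2 \<le> k" "k \<le> n" and be0: "0 \<le> \<beta>" by (auto simp: encodes_def)
  have "k - 1 \<in> {1..n}" using k2 by auto
  then have a0: "0 \<le> a (k-1)" using enc by (auto simp: encodes_def)
  have w: "path \<Omega> (k-1) = rep (a (k-1)) E @ rep \<beta> F @ [N] @ rep (int k - 2 - a (k-1) - \<beta>) F"
    and c0: "int k - 2 - a (k-1) - \<beta> \<ge> 0" using enc by (auto simp: encodes_def)
  note t = tf_N[OF a0 be0 c0 w]
  have ik: "int (k - 1) = int k - 1" using k2 by simp
  have noN: "\<And>i p. i \<in> {1..n} \<Longrightarrow> i \<noteq> k - 1 \<Longrightarrow> p < length (path \<Omega> i) \<Longrightarrow> path \<Omega> i ! p \<noteq> N"
  proof
    fix i p assume i: "i \<in> {1..n}" "i \<noteq> k - 1" "p < length (path \<Omega> i)" "path \<Omega> i ! p = N"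
    have "count_step N (path \<Omega> i) = 0" using enc_path[OF enc i(1)] i(2) by simp
    then show False using i(3,4) count_zero_iff nth_mem by metis
  qed
  show ?thesis
  proof (intro equalityI subsetI)
    fix q assume "q \<in> N_ends n \<Omega>"
    then obtain i p where ip: "i \<in> {1..n}" "p < length (path \<Omega> i)" "path \<Omega> i ! p = N"
      "q = verts (start i) (path \<Omega> i) ! (p + 1)" unfolding N_ends_def by blast
    have ik1: "i = k - 1" using noN ip by blast
    then have "p = nat (a (k-1)) + nat \<beta>" using t(11) ip by blast
    then show "q \<in> {(a (k-1) + \<beta> + 1, int k)}" using t(12)[of "k-1"] ip ik1 ik by simp
  next
    fix q assume "q \<in> {(a (k-1) + \<beta> + 1, int k)}"
    have "k - 1 \<in> {1..n}" using k2 by auto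
    then have "verts (start (k-1)) (path \<Omega> (k-1)) ! (nat (a (k-1)) + nat \<beta> + 1) \<in> N_ends n \<Omega>"
      unfolding N_ends_def using t(11)[of "nat (a (k-1)) + nat \<beta>"] by blast
    then show "q \<in> N_ends n \<Omega>" using t(12)[of "k-1"] ik \<open>q \<in> {(a (k-1) + \<beta> + 1, int k)}\<close> by simp
  qed
qed



lemma enc_facts:
  assumes enc: "encodes n \<Omega> k a b \<beta>"
  shows "2 \<le> k" "k \<le> n" "0 \<le> b" "0 \<le> \<beta>" "k - 1 \<in> {1..n}" "k \<in> {1..n}"
    "int (k - 1) = int k - 1" "k - 1 \<noteq> k"
    "\<And>i. i \<in> {1..n} \<Longrightarrow> 0 \<le> a i"
    "\<And>i. i \<in> {1..n} \<Longrightarrow> i \<noteq> k - 1 \<Longrightarrow> i \<noteq> k \<Longrightarrow> a i \<le> int i - 1"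
    "a (k-1) + \<beta> \<le> int k - 2" "a k + b \<le> int k - 2" "length \<Omega> = n"
  using enc by (auto simp: encodes_def)

lemma enc_eq:
  assumes "encodes n X k a b \<beta>" "encodes n Y k a b \<beta>"
  shows "X = Y"
proof (rule nth_equalityI)
  show "length X = length Y" using assms by (simp add: encodes_def)
  fix q assume q: "q < length X"
  then have i: "Suc q \<in> {1..n}" using assms by (auto simp: encodes_def)
  have "path X (Suc q) = path Y (Suc q)"
  proof (cases "Suc q = k")
    case True then show ?thesis using assms by (simp add: encodes_def)
  next
    case False
    show ?thesis
    proof (cases "Suc q = k - 1")
      case True then show ?thesis using assms by (simp add: encodes_def)
    next
      case F2: False
      then show ?thesis using assms i False unfolding encodes_def by metis
    qed
  qed
  then show "X ! q = Y ! q" by (simp add: path_def)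
qed

lemma enc_cong:
  assumes "encodes n X k a b \<beta>" "\<forall>i\<in>{1..n}. a i = a' i"
  shows "encodes n X k a' b \<beta>"
proof -
  have k: "k - 1 \<in> {1..n}" "k \<in> {1..n}" using enc_facts[OF assms(1)] by auto
  then have "a (k-1) = a' (k-1)" "a k = a' k" using assms(2) by auto
  then show ?thesis using assms unfolding encodes_def by auto
qed

lemma sig_bij:
  assumes "2 \<le> k" "k \<le> n"
  shows "bij_betw (sig k) {1..n} {1..n}"
proof (rule bij_betw_byWitness[where f' = "sig k"])
  show "\<forall>x\<in>{1..n}. sig k (sig k x) = x" using assms by (auto simp: sig_def)
  show "\<forall>x\<in>{1..n}. sig k (sig k x) = x" using assms by (auto simp: sig_def)
  show "sig k ` {1..n} \<subseteq> {1..n}" using assms by (auto simp: sig_def)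
  then show "sig k ` {1..n} \<subseteq> {1..n}" .
qed

lemma enc_M:
  assumes enc: "encodes n \<Omega> k a b \<beta>" and o1: "a (k-1) < a k" and o2: "a (k-1) + \<beta> < a k + b"
  shows "\<Omega> \<in> M n 1"
proof -
  note f = enc_facts[OF enc]
  note P = enc_path[OF enc]
  have inG: "in_G n v" if i: "i \<in> {1..n}" and v: "v \<in> LV k a b i \<union> RV k a b \<beta> i" for i v
  proof -
    have ai: "0 \<le> a i" using f(9) i by blast
    show ?thesis
    proof (cases "i = k")
      case True then show ?thesis using v f(1-4) f(12) ai o1 i
        by (auto simp: LV_def RV_def in_G_def)
    next
      case nk: False
      show ?thesis
      proof (cases "i = k - 1")
        case True then show ?thesis using v f(1-4) f(7,8,11) ai nk o1 i
          by (auto simp: LV_def RV_def in_G_def)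
      next
        case False
        have "a i \<le> int i - 1" using f(10) i nk False by blast
        then show ?thesis using v ai nk False i
          by (auto simp: LV_def RV_def in_G_def)
      qed
    qed
  qed
  have jk: "\<And>j. int j = int k - 1 \<longleftrightarrow> j = k - 1" using f(1) by auto
  have LVd: "LV k a b i \<inter> LV k a b j = {}" if "i \<noteq> j" for i j
  proof -
    have "i = j" if "v \<in> LV k a b i" "v \<in> LV k a b j" for v
      using that \<open>i \<noteq> j\<close> o1 f(1)
      by (auto simp: LV_def jk split: if_splits)
    then show ?thesis using that by blast
  qed
  have RVd: "RV k a b \<beta> i \<inter> RV k a b \<beta> j = {}" if "i \<noteq> j" for i j
  proof -
    have "i = j" if "v \<in> RV k a b \<beta> i" "v \<in> RV k a b \<beta> j" for v
      using that \<open>i \<noteq> j\<close> o2 f(1)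
      by (auto simp: RV_def jk split: if_splits)
    then show ?thesis using that by blast
  qed
  have mc: "mixed_config n \<Omega>"
    unfolding mixed_config_def
  proof (intro conjI ballI allI impI)
    show "length \<Omega> = n" using f(13) .
  next
    fix i assume i: "i \<in> {1..n}"
    show "mixed_word (path \<Omega> i)" using P[OF i] by blast
  next
    fix i v assume i: "i \<in> {1..n}" and v: "v \<in> set (verts (start i) (path \<Omega> i))"
    then show "in_G n v" using P[OF i] inG[OF i] by blast
  next
    show "\<exists>\<sigma>. bij_betw \<sigma> {1..n} {1..n} \<and>
          (\<forall>i\<in>{1..n}. endpt (start i) (path \<Omega> i) = (int (\<sigma> i) - 1, int (\<sigma> i)))"
      using sig_bij[OF f(1,2)] P by blast
  next
    fix i j assume "i \<in> {1..n}" "j \<in> {1..n}" "i \<noteq> j"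
    then show "left_verts i (path \<Omega> i) \<inter> left_verts j (path \<Omega> j) = {}"
      "right_verts i (path \<Omega> i) \<inter> right_verts j (path \<Omega> j) = {}"
      using P LVd RVd by auto
  qed
  have "(\<Sum>i=1..n. count_step N (path \<Omega> i)) = (\<Sum>i=1..n. if i = k - 1 then 1 else 0)"
    using P by (intro sum.cong) auto
  also have "\<dots> = 1" using f(5) by simp
  finally show ?thesis using mc by (simp add: M_def)
qed

lemma M_order:
  assumes "\<Omega> \<in> M n 1" and enc: "encodes n \<Omega> k a b \<beta>"
  shows "a (k-1) < a k" "a (k-1) + \<beta> < a k + b"
proof -
  note f = enc_facts[OF enc]
  note P = enc_path[OF enc]
  have mc: "mixed_config n \<Omega>" using assms(1) by (simp add: M_def)
  have dis: "left_verts k (path \<Omega> k) \<inter> left_verts (k-1) (path \<Omega> (k-1)) = {}"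
    "right_verts k (path \<Omega> k) \<inter> right_verts (k-1) (path \<Omega> (k-1)) = {}"
    using mc f(5,6,8) unfolding mixed_config_def by metis+
  have ak0: "0 \<le> a k" using f(9) f(6) by blast
  show o1: "a (k-1) < a k"
  proof (rule ccontr)
    assume "\<not> a (k-1) < a k"
    then have "(a k, int k - 1) \<in> LV k a b k \<inter> LV k a b (k-1)"
      using ak0 f(3,7,8) by (auto simp: LV_def)
    then show False using dis(1) P[OF f(6)] P[OF f(5)] by auto
  qed
  show "a (k-1) + \<beta> < a k + b"
  proof (rule ccontr)
    assume "\<not> a (k-1) + \<beta> < a k + b"
    then have "(a k + b, int k - 1) \<in> RV k a b \<beta> k \<inter> RV k a b \<beta> (k-1)"
      using ak0 o1 f(3,4,7,8,12) by (auto simp: RV_def)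
    then show False using dis(2) P[OF f(6)] P[OF f(5)] by auto
  qed
qed



lemma sum_one:
  assumes "finite A" "(\<Sum>i\<in>A. f i) = (1::nat)"
  shows "\<exists>j\<in>A. f j = 1 \<and> (\<forall>i\<in>A. i \<noteq> j \<longrightarrow> f i = 0)"
proof -
  have "\<exists>j\<in>A. f j \<noteq> 0"
  proof (rule ccontr)
    assume "\<not> ?thesis" then have "(\<Sum>i\<in>A. f i) = 0" by simp
    then show False using assms(2) by simp
  qed
  then obtain j where j: "j \<in> A" "f j \<noteq> 0" by blast
  have "(\<Sum>i\<in>A. f i) = f j + (\<Sum>i\<in>A - {j}. f i)" using assms(1) j(1) by (simp add: sum.remove)
  then have 1: "f j = 1" and 2: "(\<Sum>i\<in>A - {j}. f i) = 0" using assms(2) j(2) by auto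
  have "\<forall>i\<in>A - {j}. f i = 0" using 2 assms(1) by simp
  then show ?thesis using j(1) 1 by blast
qed

lemma mixed_split:
  assumes "mixed_word w"
  obtains L R where "w = L @ R" "set L \<subseteq> {S, E}" "set R \<subseteq> {F, N}"
    "count_step S R = 0" "count_step N L = 0"
proof -
  obtain L R where *: "w = L @ R" "set L \<subseteq> {S, E}" "set R \<subseteq> {F, N}"
    using assms by (auto simp: mixed_word_def)
  have "S \<notin> set R" "N \<notin> set L" using * by auto
  then have "count_step S R = 0" "count_step N L = 0" by (simp_all add: count_zero_iff)
  then show ?thesis by (rule that[OF *(1-3)])
qed

lemma shapeE:
  assumes "mixed_word w" "count_step S w = 0" "count_step N w = 0"
  shows "\<exists>a c. w = replicate a E @ replicate c F"
proof -
  obtain L R where *: "w = L @ R" "set L \<subseteq> {S, E}" "set R \<subseteq> {F, N}"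
    "count_step S R = 0" "count_step N L = 0" using mixed_split[OF assms(1)] by blast
  have "L = replicate (length L) E" using shape0[of L S E] * assms by auto
  moreover have "R = replicate (length R) F" using shape0[of R N F] * assms by auto
  ultimately show ?thesis using *(1) by metis
qed

lemma shapeN:
  assumes "mixed_word w" "count_step S w = 0" "count_step N w = 1"
  shows "\<exists>a \<beta> d. w = replicate a E @ replicate \<beta> F @ [N] @ replicate d F"
proof -
  obtain L R where *: "w = L @ R" "set L \<subseteq> {S, E}" "set R \<subseteq> {F, N}"
    "count_step S R = 0" "count_step N L = 0" using mixed_split[OF assms(1)] by blast
  have "L = replicate (length L) E" using shape0[of L S E] * assms by auto
  moreover obtain x y where "R = replicate x F @ N # replicate y F" using shape1[of R N F] * assms by auto
  ultimately show ?thesis using *(1) by (metis append_Cons append_Nil)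
qed

lemma shapeS:
  assumes "mixed_word w" "count_step S w = 1" "count_step N w = 0"
  shows "\<exists>a b c. w = replicate a E @ [S] @ replicate b E @ replicate c F"
proof -
  obtain L R where *: "w = L @ R" "set L \<subseteq> {S, E}" "set R \<subseteq> {F, N}"
    "count_step S R = 0" "count_step N L = 0" using mixed_split[OF assms(1)] by blast
  obtain x y where "L = replicate x E @ S # replicate y E" using shape1[of L S E] * assms by auto
  moreover have "R = replicate (length R) F" using shape0[of R N F] * assms by auto
  ultimately show ?thesis using *(1) by (metis append_Cons append_Nil append_assoc)
qed

lemma shapeSN:
  assumes "mixed_word w" "count_step S w = 1" "count_step N w = 1"
  shows "\<exists>a b c d. w = replicate a E @ [S] @ replicate b E @ replicate c F @ [N] @ replicate d F"
proof -
  obtain L R where *: "w = L @ R" "set L \<subseteq> {S, E}" "set R \<subseteq> {F, N}"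
    "count_step S R = 0" "count_step N L = 0" using mixed_split[OF assms(1)] by blast
  obtain x y where "L = replicate x E @ S # replicate y E" using shape1[of L S E] * assms by auto
  moreover obtain u v where "R = replicate u F @ N # replicate v F" using shape1[of R N F] * assms by auto
  ultimately show ?thesis using *(1) by (metis append_Cons append_Nil append_assoc)
qed

lemma lr_id: "leftpart w @ rightpart w = w"
  by (simp add: leftpart_def rightpart_def)

lemma junction_facts:
  "junction i w \<in> left_verts i w" "junction i w \<in> right_verts i w"
  "left_verts i w \<subseteq> set (verts (start i) w)"
proof -
  show "junction i w \<in> left_verts i w"
    by (simp add: junction_def left_verts_def endpt_mem)
  show "junction i w \<in> right_verts i w"
    by (simp add: right_verts_def hd_verts_mem)
  have "set (verts (start i) w) = set (verts (start i) (leftpart w @ rightpart w))" by (simp add: lr_id)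
  then show "left_verts i w \<subseteq> set (verts (start i) w)"
    by (simp add: set_verts_append left_verts_def)
qed



lemma classify:
  assumes M: "\<Omega> \<in> M n 1"
  shows "\<exists>k a b \<beta>. encodes n \<Omega> k a b \<beta>"
proof -
  have mc: "mixed_config n \<Omega>" and sN: "(\<Sum>i=1..n. count_step N (path \<Omega> i)) = 1"
    using M by (auto simp: M_def)
  have len: "length \<Omega> = n" using mc by (simp add: mixed_config_def)
  have mixed: "\<And>i. i \<in> {1..n} \<Longrightarrow> mixed_word (path \<Omega> i)"
    using mc unfolding mixed_config_def by blast
  have inG: "\<And>i v. i \<in> {1..n} \<Longrightarrow> v \<in> set (verts (start i) (path \<Omega> i)) \<Longrightarrow> in_G n v"
    using mc unfolding mixed_config_def by blast
  have disL: "\<And>i j. i \<in> {1..n} \<Longrightarrow> j \<in> {1..n} \<Longrightarrow> i \<noteq> j \<Longrightarrow>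
      left_verts i (path \<Omega> i) \<inter> left_verts j (path \<Omega> j) = {}"
    using mc unfolding mixed_config_def by blast
  have disR: "\<And>i j. i \<in> {1..n} \<Longrightarrow> j \<in> {1..n} \<Longrightarrow> i \<noteq> j \<Longrightarrow>
      right_verts i (path \<Omega> i) \<inter> right_verts j (path \<Omega> j) = {}"
    using mc unfolding mixed_config_def by blast
  obtain \<sigma> where bij: "bij_betw \<sigma> {1..n} {1..n}"
    and ends: "\<And>i. i \<in> {1..n} \<Longrightarrow> endpt (start i) (path \<Omega> i) = (int (\<sigma> i) - 1, int (\<sigma> i))"
    using mc unfolding mixed_config_def by blast
  define cS where "cS i = count_step S (path \<Omega> i)" for i
  define cN where "cN i = count_step N (path \<Omega> i)" for i
  have ef: "int (length (path \<Omega> i)) - int (cS i) = int (\<sigma> i) - 1 \<and>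
            int i + int (cN i) - int (cS i) = int (\<sigma> i)" if i: "i \<in> {1..n}" for i
  proof -
    have "endpt (start i) (path \<Omega> i) = (int (length (path \<Omega> i)) - int (cS i), int i + int (cN i) - int (cS i))"
      using endpt_formula[of "start i" "path \<Omega> i"] by (simp add: start_def cS_def cN_def)
    then show ?thesis using ends[OF i] by simp
  qed
  have s1: "(\<Sum>i=1..n. int (\<sigma> i)) = (\<Sum>i=1..n. int i)"
    using sum.reindex_bij_betw[OF bij, of int] by simp
  have "(\<Sum>i=1..n. int (\<sigma> i)) = (\<Sum>i=1..n. int i + int (cN i) - int (cS i))"
    using ef by (intro sum.cong) auto
  also have "\<dots> = (\<Sum>i=1..n. int i) + (\<Sum>i=1..n. int (cN i)) - (\<Sum>i=1..n. int (cS i))"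
    by (simp add: sum.distrib sum_subtractf)
  finally have "(\<Sum>i=1..n. int (cS i)) = (\<Sum>i=1..n. int (cN i))" using s1 by simp
  then have "int (\<Sum>i=1..n. cS i) = int (\<Sum>i=1..n. cN i)" by (simp only: of_nat_sum)
  then have "(\<Sum>i=1..n. cS i) = (\<Sum>i=1..n. cN i)" by (simp only: of_nat_eq_iff)
  then have sS: "(\<Sum>i=1..n. cS i) = 1" using sN by (simp add: cN_def)
  have sN': "(\<Sum>i=1..n. cN i) = 1" using sN by (simp add: cN_def)
  obtain k where k: "k \<in> {1..n}" "cS k = 1" "\<And>i. i \<in> {1..n} \<Longrightarrow> i \<noteq> k \<Longrightarrow> cS i = 0"
    using sum_one[OF _ sS] by auto
  obtain j where j: "j \<in> {1..n}" "cN j = 1" "\<And>i. i \<in> {1..n} \<Longrightarrow> i \<noteq> j \<Longrightarrow> cN i = 0"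
    using sum_one[OF _ sN'] by auto
  have sig_other: "int (\<sigma> i) = int i" if "i \<in> {1..n}" "i \<noteq> k" "i \<noteq> j" for i
    using ef[OF that(1)] k(3)[OF that(1,2)] j(3)[OF that(1,3)] by simp
  have jk: "j \<noteq> k"
  proof
    assume jk: "j = k"
    obtain a b c d where wk: "path \<Omega> k = replicate a E @ [S] @ replicate b E @ replicate c F @ [N] @ replicate d F"
    proof -
      have "count_step S (path \<Omega> k) = 1" "count_step N (path \<Omega> k) = 1"
        using k(2) j(2) jk unfolding cS_def cN_def by auto
      then show ?thesis using shapeSN[OF mixed[OF k(1)]] that by blast
    qed
    have lp: "leftpart (path \<Omega> k) = replicate a E @ [S] @ replicate b E"
      using wk by (simp add: leftpart_def)
    have J: "junction k (path \<Omega> k) = (int a + int b, int k - 1)"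
      using lp by (simp add: junction_def start_def endpt_append vE)
    have "in_G n (junction k (path \<Omega> k))" using inG[OF k(1)] junction_facts(1,3) by blast
    then have k2: "2 \<le> k" and ab: "int a + int b < int k - 1" using J by (auto simp: in_G_def)
    have ik: "int (k - 1) = int k - 1" using k2 by simp
    have k1: "k - 1 \<in> {1..n}" "k - 1 \<noteq> k" "k - 1 \<noteq> j" using k2 k(1) jk by auto
    obtain a' c' where w1: "path \<Omega> (k-1) = replicate a' E @ replicate c' F"
    proof -
      have "count_step S (path \<Omega> (k-1)) = 0" "count_step N (path \<Omega> (k-1)) = 0"
        using k(3)[OF k1(1,2)] j(3)[OF k1(1,3)] unfolding cS_def cN_def by auto
      then show ?thesis using shapeE[OF mixed[OF k1(1)]] that by blast
    qed
    have w1': "path \<Omega> (k-1) = rep (int a') E @ rep (int c') F" using w1 by (simp add: rep_nat)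
    note t = tf_E[OF _ _ w1', simplified]
    have sk1: "int (\<sigma> (k-1)) = int k - 1" using sig_other[OF k1] ik by simp
    have "int a' + int c' = int k - 2" using t(6)[of "k-1"] ends[OF k1(1)] sk1 by simp
    have "junction k (path \<Omega> k) \<in> left_verts k (path \<Omega> k)"
      "junction k (path \<Omega> k) \<in> right_verts k (path \<Omega> k)" using junction_facts by auto
    show False
    proof (cases "int a + int b \<le> int a'")
      case True
      then have "junction k (path \<Omega> k) \<in> left_verts (k-1) (path \<Omega> (k-1))"
        using t(3)[of "k-1"] J ik by simp
      then show False using disL[OF k(1) k1(1) k1(2)[symmetric]] \<open>junction k (path \<Omega> k) \<in> left_verts k (path \<Omega> k)\<close>
        by blast
    next
      case False
      then have "junction k (path \<Omega> k) \<in> right_verts (k-1) (path \<Omega> (k-1))"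
        using t(5)[of "k-1"] J ik ab \<open>int a' + int c' = int k - 2\<close> by simp
      then show False using disR[OF k(1) k1(1) k1(2)[symmetric]] \<open>junction k (path \<Omega> k) \<in> right_verts k (path \<Omega> k)\<close>
        by blast
    qed
  qed
  have cNk: "cN k = 0" using j(3)[OF k(1)] jk by simp
  have sk: "int (\<sigma> k) = int k - 1" using ef[OF k(1)] k(2) cNk by simp
  have "\<sigma> k \<in> {1..n}" by (rule bij_betw_apply[OF bij k(1)])
  then have "int (\<sigma> k) \<ge> 1" by simp
  then have k2: "2 \<le> k" using sk by linarith
  have ik: "int (k - 1) = int k - 1" using k2 by simp
  have k1: "k - 1 \<in> {1..n}" "k - 1 \<noteq> k" using k2 k(1) by auto
  have jk1: "j = k - 1"
  proof (rule ccontr)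
    assume "j \<noteq> k - 1"
    then have "int (\<sigma> (k-1)) = int (k-1)" using sig_other[OF k1] by auto
    then have "\<sigma> (k-1) = \<sigma> k" using sk ik by simp
    then have "k - 1 = k" using inj_onD[OF bij_betw_imp_inj_on[OF bij] _ k1(1) k(1)] by blast
    then show False using k1(2) by simp
  qed
  have cSk1: "cS (k-1) = 0" using k(3)[OF k1(1,2)] .
  have sj: "int (\<sigma> (k-1)) = int k" using ef[OF k1(1)] j(2) jk1 cSk1 ik by simp
  obtain a b c where wk: "path \<Omega> k = replicate a E @ [S] @ replicate b E @ replicate c F"
  proof -
    have "count_step S (path \<Omega> k) = 1" "count_step N (path \<Omega> k) = 0"
      using k(2) cNk unfolding cS_def cN_def by auto
    then show ?thesis using shapeS[OF mixed[OF k(1)]] that by blast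
  qed
  have abc: "int a + int b + int c = int k - 2" using ef[OF k(1)] wk sk k(2) by simp
  obtain a' \<beta> d where w1: "path \<Omega> (k-1) = replicate a' E @ replicate \<beta> F @ [N] @ replicate d F"
  proof -
    have "count_step S (path \<Omega> (k-1)) = 0" "count_step N (path \<Omega> (k-1)) = 1"
      using cSk1 j(2) jk1 unfolding cS_def cN_def by auto
    then show ?thesis using shapeN[OF mixed[OF k1(1)]] that by blast
  qed
  have abd: "int a' + int \<beta> + 1 + int d = int k - 1" using ef[OF k1(1)] w1 sj cSk1 by simp
  have others: "\<forall>i\<in>{1..n} - {k-1, k}. \<exists>x::int. 0 \<le> x \<and> int i - 1 - x \<ge> 0 \<and>
                   path \<Omega> i = rep x E @ rep (int i - 1 - x) F"
  proof
    fix i assume i: "i \<in> {1..n} - {k-1, k}"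
    then have i1: "i \<in> {1..n}" "i \<noteq> k" "i \<noteq> j" using jk1 by auto
    obtain x c where w: "path \<Omega> i = replicate x E @ replicate c F"
    proof -
      have "count_step S (path \<Omega> i) = 0" "count_step N (path \<Omega> i) = 0"
        using k(3)[OF i1(1,2)] j(3)[OF i1(1,3)] unfolding cS_def cN_def by auto
      then show ?thesis using shapeE[OF mixed[OF i1(1)]] that by blast
    qed
    have "int x + int c = int i - 1" using ef[OF i1(1)] sig_other[OF i1] w k(3)[OF i1(1,2)] by simp
    then have "int i - 1 - int x = int c" by simp
    then show "\<exists>x::int. 0 \<le> x \<and> int i - 1 - x \<ge> 0 \<and> path \<Omega> i = rep x E @ rep (int i - 1 - x) F"
      using w by (intro exI[of _ "int x"]) (simp add: rep_nat)
  qed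
  obtain A0 where A0: "\<forall>i\<in>{1..n} - {k-1, k}. 0 \<le> A0 i \<and> int i - 1 - A0 i \<ge> 0 \<and>
                   path \<Omega> i = rep (A0 i) E @ rep (int i - 1 - A0 i) F"
    using bchoice[OF others] by blast
  define A where "A = A0(k-1 := int a', k := int a)"
  have Ak1: "A (k-1) = int a'" and Ak: "A k = int a" using k1 by (auto simp: A_def)
  have Ai: "A i = A0 i" if "i \<noteq> k - 1" "i \<noteq> k" for i using that by (simp add: A_def)
  have e1: "int k - 2 - int a' - int \<beta> = int d" using abd by simp
  have e2: "int k - 2 - int a - int b = int c" using abc by simp
  have "encodes n \<Omega> k A (int b) (int \<beta>)"
    unfolding encodes_def
  proof (intro conjI ballI impI)
    show "length \<Omega> = n" "2 \<le> k" "k \<le> n" "0 \<le> int b" "0 \<le> int \<beta>" using len k2 k(1) by auto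
  next
    fix i assume i: "i \<in> {1..n}"
    show "0 \<le> A i" using Ak1 Ak Ai A0 i by (cases "i = k - 1 \<or> i = k") auto
  next
    fix i assume i: "i \<in> {1..n}" and "i \<noteq> k - 1 \<and> i \<noteq> k"
    then show "int i - 1 - A i \<ge> 0" "path \<Omega> i = rep (A i) E @ rep (int i - 1 - A i) F"
      using Ai A0 by auto
  next
    show "int k - 2 - A (k-1) - int \<beta> \<ge> 0" using Ak1 e1 by simp
    show "path \<Omega> (k-1) = rep (A (k-1)) E @ rep (int \<beta>) F @ [N] @ rep (int k - 2 - A (k-1) - int \<beta>) F"
      using Ak1 e1 w1 by (simp add: rep_nat)
    show "int k - 2 - A k - int b \<ge> 0" using Ak e2 by simp
    show "path \<Omega> k = rep (A k) E @ [S] @ rep (int b) E @ rep (int k - 2 - A k - int b) F"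
      using Ak e2 wk by (simp add: rep_nat)
  qed
  then show ?thesis by blast
qed



lemma rho_img:
  "rho ` ({(a i, int i) | i. P i} \<union> {(x, y), (x', y)}) =
   {(int i - 1 - a i, int i) | i. P i} \<union> {(y - 1 - x, y), (y - 1 - x', y)}"
  by (auto simp: rho_def image_iff)

lemma uniq_table:
  assumes enc: "encodes n \<Omega> k a b \<beta>"
    and encb: "encodes n \<Omega>b k ab bb betab"
    and abk: "ab (k-1) < ab k"
    and M': "\<Omega>' \<in> M n 1"
    and J: "junctions n \<Omega>' = junctions n \<Omega>b"
    and Sx: "S_starts n \<Omega>' = S_starts n \<Omega>b"
    and Nx: "N_ends n \<Omega>' = N_ends n \<Omega>b"
  shows "encodes n \<Omega>' k ab bb betab"
proof -
  obtain k' a' b' \<beta>' where enc': "encodes n \<Omega>' k' a' b' \<beta>'" using classify[OF M'] by blast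
  note f = enc_facts[OF encb]
  note f' = enc_facts[OF enc']
  have "{(a' k', int k')} = {(ab k, int k)}" using Sx unfolding enc_S[OF enc'] enc_S[OF encb] .
  then have kk: "k' = k" by auto
  then have ak: "a' k = ab k" using \<open>{(a' k', int k')} = {(ab k, int k)}\<close> by auto
  have "{(a' (k-1) + \<beta>' + 1, int k)} = {(ab (k-1) + betab + 1, int k)}"
    using Nx enc_N[OF enc'] enc_N[OF encb] kk by simp
  then have nb: "a' (k-1) + \<beta>' = ab (k-1) + betab" by simp
  define P where "P i \<longleftrightarrow> i \<in> {1..n} \<and> i \<noteq> k - 1 \<and> i \<noteq> k" for i
  have JJ: "{(a' i, int i) | i. P i} \<union> {(a' (k-1), int k - 1), (a' k + b', int k - 1)} =
            {(ab i, int i) | i. P i} \<union> {(ab (k-1), int k - 1), (ab k + bb, int k - 1)}"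
    using J enc_junctions[OF enc'] enc_junctions[OF encb] kk unfolding P_def by simp
  have ik: "\<And>i. int i = int k - 1 \<longleftrightarrow> i = k - 1" using f(1) by auto
  have agree: "a' i = ab i" if "P i" for i
  proof -
    have "(a' i, int i) \<in> {(ab i, int i) | i. P i} \<union> {(ab (k-1), int k - 1), (ab k + bb, int k - 1)}"
      using JJ that by blast
    moreover have "i \<noteq> k - 1" using that P_def by simp
    ultimately show ?thesis using ik by auto
  qed
  have m1: "(a' k + b', int k - 1) \<in> {(ab i, int i) | i. P i} \<union> {(ab (k-1), int k - 1), (ab k + bb, int k - 1)}"
    using JJ by blast
  have m2: "(ab (k-1), int k - 1) \<in> {(a' i, int i) | i. P i} \<union> {(a' (k-1), int k - 1), (a' k + b', int k - 1)}"
    using JJ by blast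
  have notP: "\<not> P i" if "int i = int k - 1" for i using that ik P_def by auto
  have b'0: "0 \<le> b'" using f'(3) .
  have r1: "a' k + b' = ab (k-1) \<or> a' k + b' = ab k + bb" using m1 notP by auto
  have r2: "ab (k-1) = a' (k-1) \<or> ab (k-1) = a' k + b'" using m2 notP by auto
  have bb': "b' = bb" using r1 ak abk b'0 by auto
  have a1: "a' (k-1) = ab (k-1)" using r2 ak abk b'0 by auto
  have be: "\<beta>' = betab" using nb a1 by simp
  have "\<forall>i\<in>{1..n}. a' i = ab i"
  proof
    fix i assume i: "i \<in> {1..n}"
    show "a' i = ab i"
    proof (cases "i = k - 1 \<or> i = k")
      case True then show ?thesis using a1 ak by auto
    next
      case False then show ?thesis using agree i P_def by auto
    qed
  qed
  then show ?thesis using enc_cong[OF enc'[unfolded kk bb' be]] by blast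
qed

theorem lemma5:
  fixes n k :: nat and \<Omega> :: "step list list" and a :: "nat \<Rightarrow> int" and b \<beta> :: int
  assumes "\<Omega> \<in> M n 1"
    and "encodes n \<Omega> k a b \<beta>"
  shows "(\<exists>!\<Omega>'. \<Omega>' \<in> M n 1 \<and> junctions n \<Omega>' = rho ` junctions n \<Omega> \<and>
                 S_starts n \<Omega>' = rho ` S_starts n \<Omega> \<and> N_ends n \<Omega>' = rho ` N_ends n \<Omega>)
       \<and> (\<forall>\<Omega>'. \<Omega>' \<in> M n 1 \<and> junctions n \<Omega>' = rho ` junctions n \<Omega> \<and>
                 S_starts n \<Omega>' = rho ` S_starts n \<Omega> \<and> N_ends n \<Omega>' = rho ` N_ends n \<Omega>
             \<longrightarrow> encodes n \<Omega>' k
                   (\<lambda>i. if i = k - 1 then int k - 2 - a k - b else int i - 1 - a i)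
                   (a k - 1 - a (k - 1))
                   (a k + b - a (k - 1) - \<beta> - 1))"
proof -
  note enc = assms(2)
  note f = enc_facts[OF enc]
  have o1: "a (k-1) < a k" and o2: "a (k-1) + \<beta> < a k + b" using M_order[OF assms] by auto
  define ab where "ab = (\<lambda>i. if i = k - 1 then int k - 2 - a k - b else int i - 1 - a i)"
  define bb where "bb = a k - 1 - a (k - 1)"
  define betab where "betab = a k + b - a (k - 1) - \<beta> - 1"
  define g where "g i = (if i = k - 1 then rep (ab (k-1)) E @ rep betab F @ [N] @ rep (int k - 2 - ab (k-1) - betab) F
      else if i = k then rep (ab k) E @ [S] @ rep bb E @ rep (int k - 2 - ab k - bb) F
      else rep (ab i) E @ rep (int i - 1 - ab i) F)" for i
  define \<Omega>b where "\<Omega>b = map (\<lambda>q. g (Suc q)) [0..<n]"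
  have pth: "path \<Omega>b i = g i" if "i \<in> {1..n}" for i
  proof -
    have "i - 1 < n" using that by auto
    then show ?thesis using that by (simp add: path_def \<Omega>b_def)
  qed
  have ak0: "0 \<le> a k" "0 \<le> a (k-1)" using f(9) f(5,6) by auto
  have abk: "ab k = int k - 1 - a k" using f(8) by (simp add: ab_def)
  have abk1: "ab (k-1) = int k - 2 - a k - b" by (simp add: ab_def)
  have abi: "ab i = int i - 1 - a i" if "i \<noteq> k - 1" for i using that by (simp add: ab_def)
  have encb: "encodes n \<Omega>b k ab bb betab"
    unfolding encodes_def
  proof (intro conjI ballI impI)
    show "length \<Omega>b = n" by (simp add: \<Omega>b_def)
    show "2 \<le> k" "k \<le> n" using f by auto
    show "0 \<le> bb" using o1 by (simp add: bb_def)
    show "0 \<le> betab" using o2 by (simp add: betab_def)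
  next
    fix i assume i: "i \<in> {1..n}"
    show "0 \<le> ab i"
    proof (cases "i = k - 1")
      case True then show ?thesis using abk1 f(12) by simp
    next
      case False
      then show ?thesis using abi f(10)[OF i] abk i f(12) f(3) by (cases "i = k") auto
    qed
  next
    fix i assume i: "i \<in> {1..n}" and ne: "i \<noteq> k - 1 \<and> i \<noteq> k"
    show "int i - 1 - ab i \<ge> 0" using abi ne f(9)[OF i] by simp
    show "path \<Omega>b i = rep (ab i) E @ rep (int i - 1 - ab i) F" using pth[OF i] ne by (simp add: g_def)
  next
    show "int k - 2 - ab (k-1) - betab \<ge> 0" using abk1 ak0 f(4) by (simp add: betab_def)
    show "path \<Omega>b (k-1) = rep (ab (k-1)) E @ rep betab F @ [N] @ rep (int k - 2 - ab (k-1) - betab) F"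
      using pth[OF f(5)] by (simp add: g_def)
    show "int k - 2 - ab k - bb \<ge> 0" using abk ak0 by (simp add: bb_def)
    show "path \<Omega>b k = rep (ab k) E @ [S] @ rep bb E @ rep (int k - 2 - ab k - bb) F"
      using pth[OF f(6)] f(8) by (simp add: g_def)
  qed
  have ord1: "ab (k-1) < ab k" using abk abk1 f(3) by simp
  have ord2: "ab (k-1) + betab < ab k + bb" using abk abk1 f(4) by (simp add: betab_def bb_def)
  have Mb: "\<Omega>b \<in> M n 1" by (rule enc_M[OF encb ord1 ord2])
  have Jb: "junctions n \<Omega>b = rho ` junctions n \<Omega>"
  proof -
    have "{(ab i, int i) | i. i \<in> {1..n} \<and> i \<noteq> k - 1 \<and> i \<noteq> k} =
          {(int i - 1 - a i, int i) | i. i \<in> {1..n} \<and> i \<noteq> k - 1 \<and> i \<noteq> k}"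
      using abi by auto
    moreover have "ab k + bb = int k - 1 - 1 - a (k-1)" using abk by (simp add: bb_def)
    moreover have "ab (k-1) = int k - 1 - 1 - (a k + b)" using abk1 by simp
    ultimately show ?thesis
      unfolding enc_junctions[OF encb] enc_junctions[OF enc] rho_img by auto
  qed
  have Sb: "S_starts n \<Omega>b = rho ` S_starts n \<Omega>"
    unfolding enc_S[OF encb] enc_S[OF enc] using abk by (simp add: rho_def)
  have Nb: "N_ends n \<Omega>b = rho ` N_ends n \<Omega>"
    unfolding enc_N[OF encb] enc_N[OF enc] using abk1 by (simp add: rho_def betab_def)
  have U: "encodes n \<Omega>' k ab bb betab"
    if "\<Omega>' \<in> M n 1 \<and> junctions n \<Omega>' = rho ` junctions n \<Omega> \<and>
                 S_starts n \<Omega>' = rho ` S_starts n \<Omega> \<and> N_ends n \<Omega>' = rho ` N_ends n \<Omega>" for \<Omega>'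
    using uniq_table[OF enc encb ord1, of \<Omega>'] that Jb Sb Nb by simp
  have "\<exists>!\<Omega>'. \<Omega>' \<in> M n 1 \<and> junctions n \<Omega>' = rho ` junctions n \<Omega> \<and>
                 S_starts n \<Omega>' = rho ` S_starts n \<Omega> \<and> N_ends n \<Omega>' = rho ` N_ends n \<Omega>"
  proof (rule ex1I[of _ \<Omega>b])
    show "\<Omega>b \<in> M n 1 \<and> junctions n \<Omega>b = rho ` junctions n \<Omega> \<and>
                 S_starts n \<Omega>b = rho ` S_starts n \<Omega> \<and> N_ends n \<Omega>b = rho ` N_ends n \<Omega>"
      using Mb Jb Sb Nb by blast
  next
    fix \<Omega>' assume "\<Omega>' \<in> M n 1 \<and> junctions n \<Omega>' = rho ` junctions n \<Omega> \<and>
                 S_starts n \<Omega>' = rho ` S_starts n \<Omega> \<and> N_ends n \<Omega>' = rho ` N_ends n \<Omega>"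
    then show "\<Omega>' = \<Omega>b" using enc_eq[OF U encb] by blast
  qed
  moreover have "\<forall>\<Omega>'. \<Omega>' \<in> M n 1 \<and> junctions n \<Omega>' = rho ` junctions n \<Omega> \<and>
                 S_starts n \<Omega>' = rho ` S_starts n \<Omega> \<and> N_ends n \<Omega>' = rho ` N_ends n \<Omega>
             \<longrightarrow> encodes n \<Omega>' k ab bb betab"
    using U by blast
  ultimately show ?thesis unfolding ab_def bb_def betab_def by blast
qed

end
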